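(* Let $N_1,N_2,N_3$ be dyadic with $N_1\gg N_2,N_3$, let $\phi_1,\phi_2,\phi_3\in L^2(\mathbb{T})$ satisfy $\mathrm{supp}\,\hat\phi_j\subset\mathcal{I}_{N_j}$, and let $0<\delta\lesssim N_1^{-1}$. Then \[ \big\|e^{it\partial_x^2}\phi_1\cdot H\big(e^{it\partial_x^2}\phi_2\,\overline{e^{it\partial_x^2}\phi_3}\big)\big\|_{L^2([0,\delta];L^2(\mathbb{T}))}\lesssim\Big(\frac{N_2\wedge N_3}{N_1}\Big)^{1/2}\|\phi_1\|_{L^2}\|\phi_2\|_{L^2}\|\phi_3\|_{L^2}. \] The same estimate holds if $e^{it\partial_x^2}\phi_1$ is replaced by $\overline{e^{it\partial_x^2}\phi_1}$, and also if $H$ is replaced by any Fourier multiplier with bounded symbol (with the constant then depending on the bound of the symbol).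
   Context: $\mathbb{T}=\mathbb{R}/2\pi\mathbb{Z}$; $\hat\phi(n)$, $n\in\mathbb{Z}$, are Fourier coefficients. $H$ is the Hilbert transformation, the Fourier multiplier with symbol $-i\,\mathrm{sgn}(\xi)$. Dyadic numbers range over $\{1,2,4,\dots\}$; $\mathcal{I}_1=[-2,2]$, $\mathcal{I}_N=[-2N,2N]\setminus(-N/2,N/2)$ for $N\ge2$. $N_2\wedge N_3=\min\{N_2,N_3\}$. $A\gg B$ means $A\ge C_0B$ for a sufficiently large absolute constant $C_0$; $\lesssim$ hides constants depending only on the constants in these relations. *)

theory Defs
  imports "HOL-Analysis.Analysis"
begin

definition dyadic :: "nat \<Rightarrow> bool" where
  "dyadic N \<longleftrightarrow> (\<exists>k. N = 2 ^ k)"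

definition freq_set :: "nat \<Rightarrow> int set" where
  "freq_set N = (if N = 1 then {-2..2}
     else {n. \<bar>n\<bar> \<le> 2 * int N \<and> \<not> (real_of_int \<bar>n\<bar> < real N / 2)})"

text \<open>A function phi on the torus with Fourier support in I_N is (a.e.) the trigonometric
  polynomial with coefficients c (c n = 0 outside I_N). schr N c t x is
  (e^{it d_x^2} phi)(x) = sum_n c n e^{i(n x - n^2 t)}; schr N c 0 is phi itself.\<close>
definition schr :: "nat \<Rightarrow> (int \<Rightarrow> complex) \<Rightarrow> real \<Rightarrow> real \<Rightarrow> complex" where
  "schr N c t x = (\<Sum>n\<in>{-2 * int N..2 * int N}.
      c n * cis (real_of_int n * x - (real_of_int n)^2 * t))"

text \<open>Fourier multiplier with symbol sigma applied to the product
  (e^{it d^2} phi_2) * conj(e^{it d^2} phi_3), computed frequency by frequency.\<close>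
definition mult_prod :: "(int \<Rightarrow> complex) \<Rightarrow> nat \<Rightarrow> (int \<Rightarrow> complex) \<Rightarrow> nat \<Rightarrow> (int \<Rightarrow> complex)
    \<Rightarrow> real \<Rightarrow> real \<Rightarrow> complex" where
  "mult_prod \<sigma> N2 c2 N3 c3 t x = (\<Sum>n\<in>{-2 * int N2..2 * int N2}. \<Sum>m\<in>{-2 * int N3..2 * int N3}.
      \<sigma> (n - m) * c2 n * cnj (c3 m) *
      cis (real_of_int (n - m) * x - ((real_of_int n)^2 - (real_of_int m)^2) * t))"

definition hilbert_symbol :: "int \<Rightarrow> complex" where
  "hilbert_symbol k = - \<i> * of_int (sgn k)"

definition L2T :: "(real \<Rightarrow> complex) \<Rightarrow> real" where
  "L2T f = sqrt (LBINT x=0..2*pi. (cmod (f x))^2)"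

definition L2TT :: "real \<Rightarrow> (real \<Rightarrow> real \<Rightarrow> complex) \<Rightarrow> real" where
  "L2TT \<delta> F = sqrt (LBINT t=0..\<delta>. (LBINT x=0..2*pi. (cmod (F t x))^2))"

end

theory Submission imports Defs begin

definition Imu :: "real \<Rightarrow> real \<Rightarrow> real \<Rightarrow> complex" where
  "Imu \<mu> a b = (if \<mu> = 0 then complex_of_real (b - a) else (cis (\<mu> * b) - cis (\<mu> * a)) / (\<i> * complex_of_real \<mu>))"

lemma cis_has_integral:
  assumes "a \<le> b"
  shows "((\<lambda>t. cis (\<mu> * t)) has_integral Imu \<mu> a b) {a..b}"
proof (cases "\<mu> = 0")
  case True
  then show ?thesis using has_integral_const_real[of "1::complex" a b] assms
    by (simp add: Imu_def scaleR_conv_of_real)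
next
  case False
  have "((\<lambda>t. cis (\<mu> * t)) has_integral ((\<lambda>t. cis (\<mu> * t) / (\<i> * complex_of_real \<mu>)) b - (\<lambda>t. cis (\<mu> * t) / (\<i> * complex_of_real \<mu>)) a)) {a..b}"
  proof (rule fundamental_theorem_of_calculus[OF assms, where f="\<lambda>t. cis (\<mu> * t) / (\<i> * complex_of_real \<mu>)"])
    fix x assume "x \<in> {a..b}"
    have "((\<lambda>t. cis (\<mu> * t)) has_vector_derivative (\<i> * complex_of_real \<mu> * cis (\<mu> * x))) (at x within {a..b})"
    proof -
      have "((\<lambda>z. exp (\<i> * complex_of_real \<mu> * z)) has_field_derivative (\<i> * complex_of_real \<mu> * exp (\<i> * complex_of_real \<mu> * complex_of_real x))) (at (complex_of_real x))"
        by (auto intro!: derivative_eq_intros)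
      from has_vector_derivative_real_field[OF this]
      show ?thesis by (simp add: cis_conv_exp mult.assoc)
    qed
    then show "((\<lambda>t. cis (\<mu> * t) / (\<i> * complex_of_real \<mu>)) has_vector_derivative cis (\<mu> * x)) (at x within {a..b})"
      using False by (auto intro!: derivative_eq_intros)
  qed
  then show ?thesis using False by (simp add: Imu_def diff_divide_distrib)
qed

lemma expsum_has_integral:
  assumes "finite D" "a \<le> b"
  shows "((\<lambda>t. Re (\<Sum>p\<in>D. W p * cis (\<mu> p * t))) has_integral Re (\<Sum>p\<in>D. W p * Imu (\<mu> p) a b)) {a..b}"
  apply (rule has_integral_Re)
  apply (rule has_integral_sum[OF assms(1)])
  apply (rule has_integral_mult_right)
  apply (rule cis_has_integral[OF assms(2)])
  done

lemma Imu_shift: "Imu \<mu> s (s + L) = cis (\<mu> * s) * Imu \<mu> 0 L"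
  by (auto simp: Imu_def cis_mult distrib_left right_diff_distrib)

lemma Imu_bound1:
  assumes "0 \<le> L"
  shows "cmod (Imu \<mu> 0 L) \<le> L"
proof -
  have "cmod (Imu \<mu> 0 L) \<le> 1 * measure lborel {0..L}"
    by (rule has_integral_bound_real[where S="{}", OF _ _ cis_has_integral[OF assms]]) auto
  then show ?thesis using assms by simp
qed

lemma Imu_bound2:
  assumes "\<mu> \<noteq> 0"
  shows "cmod (Imu \<mu> 0 L) \<le> 2 / \<bar>\<mu>\<bar>"
proof -
  have "cmod (cis (\<mu> * L) - cis (\<mu> * 0)) \<le> 2"
    using norm_triangle_ineq4[of "cis (\<mu> * L)" "cis (\<mu> * 0)"] by simp
  then show ?thesis using assms
    by (simp add: Imu_def norm_divide norm_mult divide_right_mono)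
qed

lemma Imu_int_2pi: "Imu (real_of_int m) 0 (2 * pi) = (if m = 0 then complex_of_real (2 * pi) else 0)"
proof -
  have "cis (real_of_int m * (2 * pi)) = 1"
    using cis_multiple_2pi[of "real_of_int m"] by (simp add: mult.commute)
  then show ?thesis by (simp add: Imu_def)
qed

lemma orth_has_integral:
  assumes "finite I"
  shows "((\<lambda>x. (cmod (\<Sum>i\<in>I. G i * cis (real_of_int (\<xi> i) * x)))\<^sup>2) has_integral
     (2 * pi * Re (\<Sum>i\<in>I. \<Sum>j\<in>I. if \<xi> i = \<xi> j then G i * cnj (G j) else 0))) {0..2*pi}"
proof -
  have eq: "(cmod (\<Sum>i\<in>I. G i * cis (real_of_int (\<xi> i) * x)))\<^sup>2 =
      Re (\<Sum>i\<in>I. \<Sum>j\<in>I. G i * cnj (G j) * cis (real_of_int (\<xi> i - \<xi> j) * x))" for x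
  proof -
    have "complex_of_real ((cmod (\<Sum>i\<in>I. G i * cis (real_of_int (\<xi> i) * x)))\<^sup>2)
       = (\<Sum>i\<in>I. G i * cis (real_of_int (\<xi> i) * x)) * cnj (\<Sum>j\<in>I. G j * cis (real_of_int (\<xi> j) * x))"
      by (rule complex_norm_square)
    also have "\<dots> = (\<Sum>i\<in>I. \<Sum>j\<in>I. G i * cnj (G j) * cis (real_of_int (\<xi> i - \<xi> j) * x))"
    proof -
      have "(\<Sum>i\<in>I. G i * cis (real_of_int (\<xi> i) * x)) * cnj (\<Sum>j\<in>I. G j * cis (real_of_int (\<xi> j) * x))
        = (\<Sum>i\<in>I. \<Sum>j\<in>I. (G i * cis (real_of_int (\<xi> i) * x)) * cnj (G j * cis (real_of_int (\<xi> j) * x)))"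
        by (simp add: sum_product cnj_sum)
      also have "\<dots> = (\<Sum>i\<in>I. \<Sum>j\<in>I. G i * cnj (G j) * cis (real_of_int (\<xi> i - \<xi> j) * x))"
      proof (intro sum.cong refl)
        fix i j
        have "cis (real_of_int (\<xi> i) * x) * cis (- (real_of_int (\<xi> j) * x)) = cis (real_of_int (\<xi> i - \<xi> j) * x)"
          by (simp add: cis_mult left_diff_distrib)
        then show "G i * cis (real_of_int (\<xi> i) * x) * cnj (G j * cis (real_of_int (\<xi> j) * x)) =
          G i * cnj (G j) * cis (real_of_int (\<xi> i - \<xi> j) * x)"
          by (simp add: cis_cnj mult_ac)
      qed
      finally show ?thesis .
    qed
    finally show ?thesis by (metis Re_complex_of_real)
  qed
  have "((\<lambda>x. Re (\<Sum>p\<in>I \<times> I. (G (fst p) * cnj (G (snd p))) * cis (real_of_int (\<xi> (fst p) - \<xi> (snd p)) * x))) has_integral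
     Re (\<Sum>p\<in>I \<times> I. (G (fst p) * cnj (G (snd p))) * Imu (real_of_int (\<xi> (fst p) - \<xi> (snd p))) 0 (2*pi))) {0..2*pi}"
    by (rule expsum_has_integral) (use assms in auto)
  moreover have "(\<Sum>p\<in>I \<times> I. (G (fst p) * cnj (G (snd p))) * Imu (real_of_int (\<xi> (fst p) - \<xi> (snd p))) 0 (2*pi))
     = complex_of_real (2 * pi) * (\<Sum>i\<in>I. \<Sum>j\<in>I. if \<xi> i = \<xi> j then G i * cnj (G j) else 0)"
  proof -
    have "(\<Sum>p\<in>I \<times> I. (G (fst p) * cnj (G (snd p))) * Imu (real_of_int (\<xi> (fst p) - \<xi> (snd p))) 0 (2*pi))
      = (\<Sum>i\<in>I. \<Sum>j\<in>I. (G i * cnj (G j)) * Imu (real_of_int (\<xi> i - \<xi> j)) 0 (2*pi))"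
      by (simp only: sum.cartesian_product split_def fst_conv snd_conv)
    also have "\<dots> = (\<Sum>i\<in>I. \<Sum>j\<in>I. complex_of_real (2 * pi) * (if \<xi> i = \<xi> j then G i * cnj (G j) else 0))"
      by (intro sum.cong refl) (simp only: Imu_int_2pi, auto)
    finally show ?thesis by (simp add: sum_distrib_left)
  qed
  ultimately have H: "((\<lambda>x. Re (\<Sum>i\<in>I. \<Sum>j\<in>I. G i * cnj (G j) * cis (real_of_int (\<xi> i - \<xi> j) * x))) has_integral
     Re (complex_of_real (2 * pi) * (\<Sum>i\<in>I. \<Sum>j\<in>I. if \<xi> i = \<xi> j then G i * cnj (G j) else 0))) {0..2*pi}"
    by (simp only: sum.cartesian_product split_def fst_conv snd_conv)
  have R: "Re (complex_of_real (2 * pi) * z) = 2 * pi * Re z" for z by simp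
  show ?thesis unfolding eq using H unfolding R .
qed

lemma block_bound:
  assumes D: "finite D" and h: "0 < h"
    and nn: "\<And>t. 0 \<le> Re (\<Sum>p\<in>D. V p * cis (\<mu> p * t))"
  shows "h * integral {a+h..a+2*h} (\<lambda>t. Re (\<Sum>p\<in>D. V p * cis (\<mu> p * t)))
     \<le> Re (\<Sum>p\<in>D. V p * Imu (\<mu> p) 0 (2*h) * (cis (\<mu> p * a) * Imu (\<mu> p) 0 h))"
proof -
  let ?f = "\<lambda>t. Re (\<Sum>p\<in>D. V p * cis (\<mu> p * t))"
  define \<Phi> where "\<Phi> s = Re (\<Sum>p\<in>D. (V p * Imu (\<mu> p) 0 (2*h)) * cis (\<mu> p * s))" for s
  have fint: "(?f has_integral Re (\<Sum>p\<in>D. V p * Imu (\<mu> p) x y)) {x..y}" if "x \<le> y" for x y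
    by (rule expsum_has_integral[OF D that])
  have Phi: "integral {a+h..a+2*h} ?f \<le> \<Phi> s" if s: "s \<in> {a..a+h}" for s
  proof -
    have "integral {a+h..a+2*h} ?f \<le> integral {s..s+2*h} ?f"
      apply (rule integral_subset_le)
      using s h fint[of "a+h" "a+2*h"] fint[of s "s+2*h"] nn by (auto simp: has_integral_integrable)
    also have "\<dots> = Re (\<Sum>p\<in>D. V p * Imu (\<mu> p) s (s+2*h))"
      using fint[of s "s+2*h"] h by (simp add: integral_unique)
    also have "\<dots> = \<Phi> s"
      unfolding \<Phi>_def Imu_shift by (simp add: mult_ac)
    finally show ?thesis .
  qed
  have PhiI: "(\<Phi> has_integral Re (\<Sum>p\<in>D. (V p * Imu (\<mu> p) 0 (2*h)) * Imu (\<mu> p) a (a+h))) {a..a+h}"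
    unfolding \<Phi>_def by (rule expsum_has_integral[OF D]) (use h in simp)
  have cI: "((\<lambda>s. integral {a+h..a+2*h} ?f) has_integral (h * integral {a+h..a+2*h} ?f)) {a..a+h}"
    using has_integral_const_real[of "integral {a+h..a+2*h} ?f" a "a+h"] h by simp
  have "h * integral {a+h..a+2*h} ?f \<le> Re (\<Sum>p\<in>D. (V p * Imu (\<mu> p) 0 (2*h)) * Imu (\<mu> p) a (a+h))"
    by (rule has_integral_le[OF cI PhiI Phi])
  also have "\<dots> = Re (\<Sum>p\<in>D. V p * Imu (\<mu> p) 0 (2*h) * (cis (\<mu> p * a) * Imu (\<mu> p) 0 h))"
    by (simp add: Imu_shift)
  finally show ?thesis .
qed

lemma cover_bound:
  fixes f :: "real \<Rightarrow> real"
  assumes h: "0 < h" and T: "0 \<le> T"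
    and nn: "\<And>t. 0 \<le> f t"
    and int: "\<And>x y. f integrable_on {x..y}"
    and blk: "\<And>b. integral {b..b+h} f \<le> K"
  shows "integral {0..T} f \<le> (T / h + 1) * K"
proof -
  have K: "0 \<le> K" using blk[of 0] integral_nonneg[OF int nn, of 0 h] by simp
  have ind: "integral {0..real n * h} f \<le> real n * K" for n
  proof (induction n)
    case 0 then show ?case by simp
  next
    case (Suc n)
    have "integral {0..real (Suc n) * h} f = integral {0..real n * h} f + integral {real n * h..real n * h + h} f"
      using Henstock_Kurzweil_Integration.integral_combine[where a=0 and c="real n * h" and b="real (Suc n) * h" and f=f] int h
      by (simp add: algebra_simps)
    also have "\<dots> \<le> real n * K + K" using Suc blk[of "real n * h"] by linarith
    finally show ?case by (simp add: algebra_simps)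
  qed
  define n where "n = nat \<lceil>T / h\<rceil>"
  have n1: "T \<le> real n * h"
    using h T unfolding n_def by (simp add: pos_divide_le_eq[symmetric])
  have n2: "real n \<le> T / h + 1"
  proof -
    have "0 \<le> T / h" using h T by simp
    then have "real (nat \<lceil>T / h\<rceil>) = real_of_int \<lceil>T / h\<rceil>" by simp
    then show ?thesis unfolding n_def using ceiling_correct[of "T/h"] by linarith
  qed
  have "integral {0..T} f \<le> integral {0..real n * h} f"
    by (rule integral_subset_le) (use n1 int nn in auto)
  also have "\<dots> \<le> real n * K" by (rule ind)
  also have "\<dots> \<le> (T / h + 1) * K" using n2 K by (simp add: mult_right_mono)
  finally show ?thesis .
qed

lemma inv_sq_partial: "(\<Sum>k=1..M. 1 / (real k)\<^sup>2) \<le> 2 - 1 / real M" if "M \<ge> 1" for M :: nat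
  using that
proof (induction M rule: dec_induct)
  case base then show ?case by simp
next
  case (step M)
  have M: "real M \<ge> 1" using step by simp
  have e: "1 / real M - 1 / real (Suc M) = 1 / (real M * real (Suc M))"
    using M by (simp add: field_simps)
  have "1 / (real (Suc M))\<^sup>2 \<le> 1 / (real M * real (Suc M))"
    by (rule divide_left_mono) (use M in \<open>auto simp: power2_eq_square intro!: mult_right_mono\<close>)
  then have "1 / (real (Suc M))\<^sup>2 \<le> 1 / real M - 1 / real (Suc M)" using e by simp
  then show ?case using step by simp
qed

lemma inv_sq_nat: "finite B \<Longrightarrow> 0 \<notin> B \<Longrightarrow> (\<Sum>k\<in>B. 1 / (real k)\<^sup>2) \<le> 2" for B :: "nat set"
proof (cases "B = {}")
  case False
  assume fin: "finite B" and z: "0 \<notin> B"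
  let ?M = "Max B"
  have sub: "B \<subseteq> {1..?M}" using fin z by (auto simp: Suc_le_eq intro: Max_ge) (metis gr0I)
  have M1: "?M \<ge> 1" using False fin z by (metis Max_in not_less_eq_eq le0 less_one linorder_not_less)
  have "(\<Sum>k\<in>B. 1 / (real k)\<^sup>2) \<le> (\<Sum>k=1..?M. 1 / (real k)\<^sup>2)"
    by (rule sum_mono2) (use sub in auto)
  also have "\<dots> \<le> 2 - 1 / real ?M" by (rule inv_sq_partial[OF M1])
  finally have "(\<Sum>k\<in>B. 1 / (real k)\<^sup>2) \<le> 2 - 1 / real ?M" .
  moreover have "0 \<le> 1 / real ?M" by simp
  ultimately show ?thesis by linarith
qed simp

lemma inv_sq_int:
  assumes fin: "finite A" and z: "0 \<notin> A"
  shows "(\<Sum>m\<in>A. 1 / (real_of_int m)\<^sup>2) \<le> 4"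
proof -
  let ?P = "{m\<in>A. 0 < m}" and ?N = "{m\<in>A. m < 0}"
  have AU: "A = ?P \<union> ?N" using z by (auto simp: neq_iff) (metis linorder_neqE_linordered_idom)
  have split: "(\<Sum>m\<in>A. 1 / (real_of_int m)\<^sup>2) = (\<Sum>m\<in>?P. 1 / (real_of_int m)\<^sup>2) + (\<Sum>m\<in>?N. 1 / (real_of_int m)\<^sup>2)"
    by (subst AU, rule sum.union_disjoint) (use fin in auto)
  have P: "(\<Sum>m\<in>?P. 1 / (real_of_int m)\<^sup>2) \<le> 2"
  proof -
    have inj: "inj_on nat ?P" by (auto simp: inj_on_def)
    have "(\<Sum>m\<in>?P. 1 / (real_of_int m)\<^sup>2) = (\<Sum>k\<in>nat ` ?P. 1 / (real k)\<^sup>2)"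
      by (subst sum.reindex[OF inj]) (auto intro!: sum.cong)
    also have "\<dots> \<le> 2" by (rule inv_sq_nat) (use fin in auto)
    finally show ?thesis .
  qed
  have N: "(\<Sum>m\<in>?N. 1 / (real_of_int m)\<^sup>2) \<le> 2"
  proof -
    have inj: "inj_on (\<lambda>m. nat (- m)) ?N" by (auto simp: inj_on_def)
    have "(\<Sum>m\<in>?N. 1 / (real_of_int m)\<^sup>2) = (\<Sum>k\<in>(\<lambda>m. nat (- m)) ` ?N. 1 / (real k)\<^sup>2)"
      by (subst sum.reindex[OF inj]) (auto intro!: sum.cong)
    also have "\<dots> \<le> 2" by (rule inv_sq_nat) (use fin in auto)
    finally show ?thesis .
  qed
  show ?thesis using split P N by linarith
qed

lemma schur:
  fixes g :: "'a \<Rightarrow> real"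
  assumes fin: "finite I" and sym: "\<And>i j. B i j = B j i" and nn: "\<And>i j. 0 \<le> B i j"
    and row: "\<And>i. i \<in> I \<Longrightarrow> (\<Sum>j\<in>I. B i j) \<le> K"
  shows "(\<Sum>i\<in>I. \<Sum>j\<in>I. g i * g j * B i j) \<le> K * (\<Sum>i\<in>I. (g i)\<^sup>2)"
proof -
  have "(\<Sum>i\<in>I. \<Sum>j\<in>I. g i * g j * B i j) \<le> (\<Sum>i\<in>I. \<Sum>j\<in>I. ((g i)\<^sup>2 / 2 + (g j)\<^sup>2 / 2) * B i j)"
  proof (intro sum_mono)
    fix i j
    have "0 \<le> (g i - g j)\<^sup>2" by simp
    then have "0 \<le> (g i)\<^sup>2 + (g j)\<^sup>2 - 2 * g i * g j" by (simp add: power2_diff)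
    then have "g i * g j \<le> (g i)\<^sup>2 / 2 + (g j)\<^sup>2 / 2" by linarith
    then show "g i * g j * B i j \<le> ((g i)\<^sup>2 / 2 + (g j)\<^sup>2 / 2) * B i j"
      using nn[of i j] by (rule mult_right_mono)
  qed
  also have "\<dots> = (\<Sum>i\<in>I. \<Sum>j\<in>I. (g i)\<^sup>2 / 2 * B i j) + (\<Sum>i\<in>I. \<Sum>j\<in>I. (g j)\<^sup>2 / 2 * B i j)"
    by (simp add: distrib_right sum.distrib)
  also have "(\<Sum>i\<in>I. \<Sum>j\<in>I. (g j)\<^sup>2 / 2 * B i j) = (\<Sum>i\<in>I. \<Sum>j\<in>I. (g i)\<^sup>2 / 2 * B i j)"
    by (subst sum.swap) (simp add: sym)
  also have "(\<Sum>i\<in>I. \<Sum>j\<in>I. (g i)\<^sup>2 / 2 * B i j) + (\<Sum>i\<in>I. \<Sum>j\<in>I. (g i)\<^sup>2 / 2 * B i j)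
      = (\<Sum>i\<in>I. (g i)\<^sup>2 * (\<Sum>j\<in>I. B i j))"
    by (simp add: sum_distrib_left sum_distrib_right mult_ac flip: sum.distrib)
  also have "\<dots> \<le> (\<Sum>i\<in>I. (g i)\<^sup>2 * K)"
    by (intro sum_mono mult_left_mono row) auto
  finally show ?thesis by (simp add: sum_distrib_left mult.commute)
qed

lemma Q_has_integral:
  fixes G :: "'a \<Rightarrow> complex" and \<xi> :: "'a \<Rightarrow> int" and \<tau> :: "'a \<Rightarrow> real"
  assumes fin: "finite I"
  shows "((\<lambda>x. (cmod (\<Sum>i\<in>I. G i * cis (real_of_int (\<xi> i) * x - \<tau> i * t)))\<^sup>2) has_integral
    Re (\<Sum>p\<in>I \<times> I. (complex_of_real (2*pi) * (if \<xi> (fst p) = \<xi> (snd p) then G (fst p) * cnj (G (snd p)) else 0))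
          * cis ((\<tau> (snd p) - \<tau> (fst p)) * t))) {0..2*pi}"
proof -
  define G' where "G' i = G i * cis (- (\<tau> i * t))" for i
  have e1: "G i * cis (real_of_int (\<xi> i) * x - \<tau> i * t) = G' i * cis (real_of_int (\<xi> i) * x)" for i x
    by (simp add: G'_def cis_mult mult.assoc)
  have e2: "complex_of_real (2 * pi) * (\<Sum>i\<in>I. \<Sum>j\<in>I. if \<xi> i = \<xi> j then G' i * cnj (G' j) else 0)
     = (\<Sum>p\<in>I \<times> I. (complex_of_real (2*pi) * (if \<xi> (fst p) = \<xi> (snd p) then G (fst p) * cnj (G (snd p)) else 0))
          * cis ((\<tau> (snd p) - \<tau> (fst p)) * t))"
  proof -
    have "(\<Sum>p\<in>I \<times> I. (complex_of_real (2*pi) * (if \<xi> (fst p) = \<xi> (snd p) then G (fst p) * cnj (G (snd p)) else 0))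
          * cis ((\<tau> (snd p) - \<tau> (fst p)) * t))
      = (\<Sum>i\<in>I. \<Sum>j\<in>I. (complex_of_real (2*pi) * (if \<xi> i = \<xi> j then G i * cnj (G j) else 0))
          * cis ((\<tau> j - \<tau> i) * t))"
      by (simp only: sum.cartesian_product split_def fst_conv snd_conv)
    also have "\<dots> = (\<Sum>i\<in>I. \<Sum>j\<in>I. complex_of_real (2 * pi) * (if \<xi> i = \<xi> j then G' i * cnj (G' j) else 0))"
    proof (intro sum.cong refl)
      fix i j
      have "cis (- (\<tau> i * t)) * cis (\<tau> j * t) = cis ((\<tau> j - \<tau> i) * t)"
        by (simp add: cis_mult algebra_simps)
      then show "complex_of_real (2*pi) * (if \<xi> i = \<xi> j then G i * cnj (G j) else 0) * cis ((\<tau> j - \<tau> i) * t)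
         = complex_of_real (2 * pi) * (if \<xi> i = \<xi> j then G' i * cnj (G' j) else 0)"
        by (auto simp: G'_def cis_cnj mult_ac)
    qed
    finally show ?thesis by (simp add: sum_distrib_left)
  qed
  have R: "2 * pi * Re z = Re (complex_of_real (2 * pi) * z)" for z by simp
  show ?thesis
    using orth_has_integral[OF fin, of G' \<xi>] unfolding e1 R e2 .
qed

lemma lemA:
  fixes G :: "'a \<Rightarrow> complex" and \<xi> :: "'a \<Rightarrow> int" and \<tau> :: "'a \<Rightarrow> real" and \<pi> :: "'a \<Rightarrow> int"
  assumes fin: "finite I" and S: "0 < S" and T: "0 \<le> T"
    and sep: "\<And>i j. i \<in> I \<Longrightarrow> j \<in> I \<Longrightarrow> i \<noteq> j \<Longrightarrow> G i \<noteq> 0 \<Longrightarrow> G j \<noteq> 0 \<Longrightarrow> \<xi> i = \<xi> j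
       \<Longrightarrow> \<pi> i \<noteq> \<pi> j \<and> S * \<bar>real_of_int (\<pi> i - \<pi> j)\<bar> \<le> \<bar>\<tau> i - \<tau> j\<bar>"
  shows "integral {0..T} (\<lambda>t. integral {0..2*pi} (\<lambda>x. (cmod (\<Sum>i\<in>I. G i * cis (real_of_int (\<xi> i) * x - \<tau> i * t)))\<^sup>2))
     \<le> 36 * pi * (T + 1 / S) * (\<Sum>i\<in>I. (cmod (G i))\<^sup>2)"
proof -
  define D where "D = I \<times> I"
  define V where "V p = complex_of_real (2*pi) * (if \<xi> (fst p) = \<xi> (snd p) then G (fst p) * cnj (G (snd p)) else 0)" for p
  define \<mu> where "\<mu> p = \<tau> (snd p) - \<tau> (fst p)" for p
  define f where "f t = Re (\<Sum>p\<in>D. V p * cis (\<mu> p * t))" for t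
  have fD: "finite D" using fin by (simp add: D_def)
  have QI: "((\<lambda>x. (cmod (\<Sum>i\<in>I. G i * cis (real_of_int (\<xi> i) * x - \<tau> i * t)))\<^sup>2) has_integral f t) {0..2*pi}" for t
    using Q_has_integral[OF fin, of G \<xi> \<tau> t] unfolding f_def D_def V_def \<mu>_def .
  have Qeq: "integral {0..2*pi} (\<lambda>x. (cmod (\<Sum>i\<in>I. G i * cis (real_of_int (\<xi> i) * x - \<tau> i * t)))\<^sup>2) = f t" for t
    using QI[of t] by (rule integral_unique)
  have fnn: "0 \<le> f t" for t
    by (rule has_integral_nonneg[OF QI]) simp
  have fint: "f integrable_on {x..y}" for x y
  proof (cases "x \<le> y")
    case True
    show ?thesis unfolding f_def using expsum_has_integral[OF fD True] by (rule has_integral_integrable)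
  next
    case False then show ?thesis by (simp add: integrable_on_empty)
  qed
  define h where "h = 1 / S"
  have h: "0 < h" using S by (simp add: h_def)
  define Bk where "Bk i j = (if i = j then 2 * h\<^sup>2 else if G i \<noteq> 0 \<and> G j \<noteq> 0 \<and> \<xi> i = \<xi> j
      then 4 / (S\<^sup>2 * (real_of_int (\<pi> i - \<pi> j))\<^sup>2) else 0)" for i j
  have Bk_sym: "Bk i j = Bk j i" for i j
    unfolding Bk_def by (auto simp: power2_commute)
  have Bk_nn: "0 \<le> Bk i j" for i j unfolding Bk_def by auto
  have tm: "cmod (V (i,j) * Imu (\<mu> (i,j)) 0 (2*h) * (cis (\<mu> (i,j) * a) * Imu (\<mu> (i,j)) 0 h))
      \<le> 2 * pi * (cmod (G i) * cmod (G j) * Bk i j)" if ij: "i \<in> I" "j \<in> I" for i j a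
  proof -
    have L: "cmod (V (i,j) * Imu (\<mu> (i,j)) 0 (2*h) * (cis (\<mu> (i,j) * a) * Imu (\<mu> (i,j)) 0 h))
       = cmod (V (i,j)) * (cmod (Imu (\<mu> (i,j)) 0 (2*h)) * cmod (Imu (\<mu> (i,j)) 0 h))"
      by (simp add: norm_mult)
    show ?thesis
    proof (cases "\<xi> i = \<xi> j")
      case False
      then show ?thesis using Bk_nn[of i j] by (simp add: L V_def)
    next
      case xi: True
      have V: "cmod (V (i,j)) = 2 * pi * (cmod (G i) * cmod (G j))"
        using xi by (simp add: V_def norm_mult)
      show ?thesis
      proof (cases "i = j")
        case True
        have "cmod (Imu (\<mu> (i,j)) 0 (2*h)) * cmod (Imu (\<mu> (i,j)) 0 h) \<le> (2*h) * h"
          by (intro mult_mono Imu_bound1) (use h in auto)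
        then have "cmod (Imu (\<mu> (i,j)) 0 (2*h)) * cmod (Imu (\<mu> (i,j)) 0 h) \<le> Bk i j"
          using True by (simp add: Bk_def power2_eq_square)
        note B = this
        show ?thesis unfolding L V
          using mult_left_mono[OF B, of "2 * pi * (cmod (G i) * cmod (G j))"] by (simp add: mult_ac)
      next
        case ne: False
        show ?thesis
        proof (cases "G i \<noteq> 0 \<and> G j \<noteq> 0")
          case False
          then show ?thesis using Bk_nn[of i j] by (auto simp: L V)
        next
          case True
          from sep[OF ij ne _ _ xi] True
          have pi: "\<pi> i \<noteq> \<pi> j" and sp: "S * \<bar>real_of_int (\<pi> i - \<pi> j)\<bar> \<le> \<bar>\<tau> i - \<tau> j\<bar>" by auto
          have pos: "0 < S * \<bar>real_of_int (\<pi> i - \<pi> j)\<bar>" using S pi by simp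
          have mu: "\<bar>\<mu> (i,j)\<bar> = \<bar>\<tau> i - \<tau> j\<bar>" by (simp add: \<mu>_def)
          have mu0: "\<mu> (i,j) \<noteq> 0" using pos sp mu by auto
          have "cmod (Imu (\<mu> (i,j)) 0 (2*h)) * cmod (Imu (\<mu> (i,j)) 0 h) \<le> (2 / \<bar>\<mu> (i,j)\<bar>) * (2 / \<bar>\<mu> (i,j)\<bar>)"
            by (intro mult_mono Imu_bound2 mu0) auto
          also have "\<dots> \<le> (2 / (S * \<bar>real_of_int (\<pi> i - \<pi> j)\<bar>)) * (2 / (S * \<bar>real_of_int (\<pi> i - \<pi> j)\<bar>))"
            by (intro mult_mono divide_left_mono) (use pos sp mu in auto)
          also have "\<dots> = Bk i j"
            using ne True xi by (simp add: Bk_def power2_eq_square abs_mult_self_eq field_simps)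
          finally have "cmod (Imu (\<mu> (i,j)) 0 (2*h)) * cmod (Imu (\<mu> (i,j)) 0 h) \<le> Bk i j" .
          note B = this
          show ?thesis unfolding L V
            using mult_left_mono[OF B, of "2 * pi * (cmod (G i) * cmod (G j))"] by (simp add: mult_ac)
        qed
      qed
    qed
  qed
  have row: "(\<Sum>j\<in>I. Bk i j) \<le> 18 / S\<^sup>2" if i: "i \<in> I" for i
  proof -
    define J where "J = {j\<in>I - {i}. G i \<noteq> 0 \<and> G j \<noteq> 0 \<and> \<xi> i = \<xi> j}"
    have fJ: "finite J" using fin by (simp add: J_def)
    have "(\<Sum>j\<in>I. Bk i j) = Bk i i + (\<Sum>j\<in>I - {i}. Bk i j)"
      using fin i by (simp add: sum.remove)
    also have "(\<Sum>j\<in>I - {i}. Bk i j) = (\<Sum>j\<in>J. 4 / (S\<^sup>2 * (real_of_int (\<pi> i - \<pi> j))\<^sup>2))"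
    proof -
      have "(\<Sum>j\<in>I - {i}. Bk i j) = (\<Sum>j\<in>I - {i}. if G i \<noteq> 0 \<and> G j \<noteq> 0 \<and> \<xi> i = \<xi> j then 4 / (S\<^sup>2 * (real_of_int (\<pi> i - \<pi> j))\<^sup>2) else 0)"
        by (rule sum.cong) (auto simp: Bk_def)
      also have "\<dots> = (\<Sum>j\<in>J. 4 / (S\<^sup>2 * (real_of_int (\<pi> i - \<pi> j))\<^sup>2))"
        unfolding J_def by (rule sum.inter_filter[symmetric]) (use fin in simp)
      finally show ?thesis .
    qed
    also have "\<dots> = 4 / S\<^sup>2 * (\<Sum>j\<in>J. 1 / (real_of_int (\<pi> j - \<pi> i))\<^sup>2)"
      by (simp add: sum_distrib_left power2_commute)
    also have "(\<Sum>j\<in>J. 1 / (real_of_int (\<pi> j - \<pi> i))\<^sup>2) = (\<Sum>m\<in>(\<lambda>j. \<pi> j - \<pi> i) ` J. 1 / (real_of_int m)\<^sup>2)"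
    proof -
      have "inj_on (\<lambda>j. \<pi> j - \<pi> i) J"
      proof (rule inj_onI)
        fix j j' assume j: "j \<in> J" and j': "j' \<in> J" and eq: "\<pi> j - \<pi> i = \<pi> j' - \<pi> i"
        show "j = j'"
        proof (rule ccontr)
          assume "j \<noteq> j'"
          with sep[of j j'] j j' eq show False by (auto simp: J_def)
        qed
      qed
      then show ?thesis by (simp add: sum.reindex)
    qed
    also have "\<dots> \<le> 4"
    proof (rule inv_sq_int)
      show "finite ((\<lambda>j. \<pi> j - \<pi> i) ` J)" using fJ by simp
      show "0 \<notin> (\<lambda>j. \<pi> j - \<pi> i) ` J"
      proof
        assume "0 \<in> (\<lambda>j. \<pi> j - \<pi> i) ` J"
        then obtain j where j: "j \<in> J" "\<pi> j = \<pi> i" by auto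
        with sep[of i j] i show False by (auto simp: J_def)
      qed
    qed
    finally have "(\<Sum>j\<in>I. Bk i j) \<le> Bk i i + 4 / S\<^sup>2 * 4"
      using S by (simp add: divide_right_mono)
    also have "\<dots> = 18 / S\<^sup>2" using S by (simp add: Bk_def h_def power2_eq_square field_simps)
    finally show ?thesis .
  qed
  have blk: "integral {b..b+h} f \<le> 36 * pi / S * (\<Sum>i\<in>I. (cmod (G i))\<^sup>2)" for b
  proof -
    have "h * integral {b..b+h} f = h * integral {(b-h)+h..(b-h)+2*h} f" by (simp add: add.commute)
    also have "\<dots> \<le> Re (\<Sum>p\<in>D. V p * Imu (\<mu> p) 0 (2*h) * (cis (\<mu> p * (b-h)) * Imu (\<mu> p) 0 h))"
      unfolding f_def by (rule block_bound[OF fD h]) (use fnn in \<open>simp add: f_def\<close>)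
    also have "\<dots> \<le> (\<Sum>p\<in>D. cmod (V p * Imu (\<mu> p) 0 (2*h) * (cis (\<mu> p * (b-h)) * Imu (\<mu> p) 0 h)))"
      by (rule order_trans[OF complex_Re_le_cmod norm_sum])
    also have "\<dots> = (\<Sum>i\<in>I. \<Sum>j\<in>I. cmod (V (i,j) * Imu (\<mu> (i,j)) 0 (2*h) * (cis (\<mu> (i,j) * (b-h)) * Imu (\<mu> (i,j)) 0 h)))"
      unfolding D_def by (simp add: sum.cartesian_product split_def)
    also have "\<dots> \<le> (\<Sum>i\<in>I. \<Sum>j\<in>I. 2 * pi * (cmod (G i) * cmod (G j) * Bk i j))"
      by (intro sum_mono tm)
    also have "\<dots> = 2 * pi * (\<Sum>i\<in>I. \<Sum>j\<in>I. cmod (G i) * cmod (G j) * Bk i j)"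
      by (simp add: sum_distrib_left)
    also have "\<dots> \<le> 2 * pi * (18 / S\<^sup>2 * (\<Sum>i\<in>I. (cmod (G i))\<^sup>2))"
      by (intro mult_left_mono schur[OF fin Bk_sym Bk_nn row]) auto
    finally have "h * integral {b..b+h} f \<le> 2 * pi * (18 / S\<^sup>2 * (\<Sum>i\<in>I. (cmod (G i))\<^sup>2))" .
    then have "integral {b..b+h} f \<le> S * (2 * pi * (18 / S\<^sup>2 * (\<Sum>i\<in>I. (cmod (G i))\<^sup>2)))"
      using S by (simp add: h_def field_simps)
    also have "\<dots> = 36 * pi / S * (\<Sum>i\<in>I. (cmod (G i))\<^sup>2)"
      using S by (simp add: power2_eq_square field_simps)
    finally show ?thesis .
  qed
  have "integral {0..T} f \<le> (T / h + 1) * (36 * pi / S * (\<Sum>i\<in>I. (cmod (G i))\<^sup>2))"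
    by (rule cover_bound[OF h T fnn fint blk])
  also have "\<dots> = 36 * pi * (T + 1 / S) * (\<Sum>i\<in>I. (cmod (G i))\<^sup>2)"
    using S by (simp add: h_def field_simps)
  finally show ?thesis unfolding Qeq .
qed

lemma Q_integrable:
  fixes G :: "'a \<Rightarrow> complex" and \<xi> :: "'a \<Rightarrow> int" and \<tau> :: "'a \<Rightarrow> real"
  assumes fin: "finite I"
  shows "(\<lambda>t. integral {0..2*pi} (\<lambda>x. (cmod (\<Sum>i\<in>I. G i * cis (real_of_int (\<xi> i) * x - \<tau> i * t)))\<^sup>2)) integrable_on {a..b}"
proof (cases "a \<le> b")
  case True
  have e: "integral {0..2*pi} (\<lambda>x. (cmod (\<Sum>i\<in>I. G i * cis (real_of_int (\<xi> i) * x - \<tau> i * t)))\<^sup>2) =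
    Re (\<Sum>p\<in>I \<times> I. (complex_of_real (2*pi) * (if \<xi> (fst p) = \<xi> (snd p) then G (fst p) * cnj (G (snd p)) else 0))
          * cis ((\<tau> (snd p) - \<tau> (fst p)) * t))" for t
    by (rule integral_unique[OF Q_has_integral[OF fin]])
  show ?thesis unfolding e
    by (rule has_integral_integrable[OF expsum_has_integral]) (use fin True in auto)
next
  case False then show ?thesis by (simp add: integrable_on_empty)
qed

lemma Qx_integrable:
  fixes G :: "'a \<Rightarrow> complex" and \<xi> :: "'a \<Rightarrow> int" and \<tau> :: "'a \<Rightarrow> real"
  assumes fin: "finite I"
  shows "(\<lambda>x. (cmod (\<Sum>i\<in>I. G i * cis (real_of_int (\<xi> i) * x - \<tau> i * t)))\<^sup>2) integrable_on {0..2*pi}"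
  using Q_has_integral[OF fin] by (rule has_integral_integrable)

lemma lemB:
  fixes G :: "int \<Rightarrow> int \<Rightarrow> int \<Rightarrow> complex" and \<xi> :: "int \<Rightarrow> int \<Rightarrow> int \<Rightarrow> int" and \<tau> :: "int \<Rightarrow> int \<Rightarrow> int \<Rightarrow> real"
  assumes fP: "finite P" and fQ: "finite Q" and fR: "finite R" and S: "0 < S" and T: "0 \<le> T"
    and sep: "\<And>p q r q' r'. p \<in> P \<Longrightarrow> q \<in> Q \<Longrightarrow> r \<in> R \<Longrightarrow> q' \<in> Q \<Longrightarrow> r' \<in> R \<Longrightarrow> (q, r) \<noteq> (q', r')
      \<Longrightarrow> G p q r \<noteq> 0 \<Longrightarrow> G p q' r' \<noteq> 0 \<Longrightarrow> \<xi> p q r = \<xi> p q' r'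
      \<Longrightarrow> q \<noteq> q' \<and> S * \<bar>real_of_int (q - q')\<bar> \<le> \<bar>\<tau> p q r - \<tau> p q' r'\<bar>"
  shows "integral {0..T} (\<lambda>t. integral {0..2*pi} (\<lambda>x. (cmod (\<Sum>p\<in>P. \<Sum>q\<in>Q. \<Sum>r\<in>R.
            G p q r * cis (real_of_int (\<xi> p q r) * x - \<tau> p q r * t)))\<^sup>2))
     \<le> real (card P) * (36 * pi * (T + 1 / S)) * (\<Sum>p\<in>P. \<Sum>q\<in>Q. \<Sum>r\<in>R. (cmod (G p q r))\<^sup>2)"
proof -
  define Fp where "Fp p t x = (\<Sum>i\<in>Q \<times> R. G p (fst i) (snd i) * cis (real_of_int (\<xi> p (fst i) (snd i)) * x - \<tau> p (fst i) (snd i) * t))" for p t x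
  define Ft where "Ft t x = (\<Sum>i\<in>P \<times> (Q \<times> R). G (fst i) (fst (snd i)) (snd (snd i)) *
       cis (real_of_int (\<xi> (fst i) (fst (snd i)) (snd (snd i))) * x - \<tau> (fst i) (fst (snd i)) (snd (snd i)) * t))" for t x
  have eF: "(\<Sum>p\<in>P. \<Sum>q\<in>Q. \<Sum>r\<in>R. G p q r * cis (real_of_int (\<xi> p q r) * x - \<tau> p q r * t)) = Ft t x" for t x
    unfolding Ft_def by (simp add: sum.cartesian_product split_def)
  have eF2: "Ft t x = (\<Sum>p\<in>P. Fp p t x)" for t x
    unfolding Ft_def Fp_def by (simp add: sum.cartesian_product split_def)
  have fQR: "finite (Q \<times> R)" using fQ fR by simp
  have fPQR: "finite (P \<times> (Q \<times> R))" using fP fQ fR by simp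
  have pw: "(cmod (Ft t x))\<^sup>2 \<le> real (card P) * (\<Sum>p\<in>P. (cmod (Fp p t x))\<^sup>2)" for t x
  proof -
    have "cmod (Ft t x) \<le> (\<Sum>p\<in>P. cmod (Fp p t x))" unfolding eF2 by (rule norm_sum)
    then have "(cmod (Ft t x))\<^sup>2 \<le> (\<Sum>p\<in>P. cmod (Fp p t x))\<^sup>2" by (simp add: power_mono)
    also have "\<dots> \<le> (\<Sum>p\<in>P. (cmod (Fp p t x))\<^sup>2) * real (card P)" by (rule sum_squared_le_sum_of_squares)
    finally show ?thesis by (simp add: mult.commute)
  qed
  have intFp: "(\<lambda>x. (cmod (Fp p t x))\<^sup>2) integrable_on {0..2*pi}" for p t
    unfolding Fp_def by (rule Qx_integrable[OF fQR])
  have intFt: "(\<lambda>x. (cmod (Ft t x))\<^sup>2) integrable_on {0..2*pi}" for t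
    unfolding Ft_def by (rule Qx_integrable[OF fPQR])
  have inner: "integral {0..2*pi} (\<lambda>x. (cmod (Ft t x))\<^sup>2) \<le> real (card P) * (\<Sum>p\<in>P. integral {0..2*pi} (\<lambda>x. (cmod (Fp p t x))\<^sup>2))" for t
  proof -
    have "integral {0..2*pi} (\<lambda>x. (cmod (Ft t x))\<^sup>2) \<le> integral {0..2*pi} (\<lambda>x. real (card P) * (\<Sum>p\<in>P. (cmod (Fp p t x))\<^sup>2))"
      by (rule integral_le[OF intFt _ pw]) (intro integrable_on_mult_right integrable_sum fP intFp)
    also have "\<dots> = real (card P) * (\<Sum>p\<in>P. integral {0..2*pi} (\<lambda>x. (cmod (Fp p t x))\<^sup>2))"
      by (simp add: integral_sum[OF fP intFp])
    finally show ?thesis .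
  qed
  have intTp: "(\<lambda>t. integral {0..2*pi} (\<lambda>x. (cmod (Fp p t x))\<^sup>2)) integrable_on {0..T}" for p
    unfolding Fp_def by (rule Q_integrable[OF fQR])
  have intTt: "(\<lambda>t. integral {0..2*pi} (\<lambda>x. (cmod (Ft t x))\<^sup>2)) integrable_on {0..T}"
    unfolding Ft_def by (rule Q_integrable[OF fPQR])
  have bp: "integral {0..T} (\<lambda>t. integral {0..2*pi} (\<lambda>x. (cmod (Fp p t x))\<^sup>2))
      \<le> 36 * pi * (T + 1 / S) * (\<Sum>q\<in>Q. \<Sum>r\<in>R. (cmod (G p q r))\<^sup>2)" if p: "p \<in> P" for p
  proof -
    have "integral {0..T} (\<lambda>t. integral {0..2*pi} (\<lambda>x. (cmod (Fp p t x))\<^sup>2))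
      \<le> 36 * pi * (T + 1 / S) * (\<Sum>i\<in>Q \<times> R. (cmod (G p (fst i) (snd i)))\<^sup>2)"
      unfolding Fp_def
    proof (rule lemA[OF fQR S T, where \<pi>=fst])
      fix i j assume i: "i \<in> Q \<times> R" and j: "j \<in> Q \<times> R" and ne: "i \<noteq> j"
        and gi: "G p (fst i) (snd i) \<noteq> 0" and gj: "G p (fst j) (snd j) \<noteq> 0"
        and xi: "\<xi> p (fst i) (snd i) = \<xi> p (fst j) (snd j)"
      show "fst i \<noteq> fst j \<and> S * \<bar>real_of_int (fst i - fst j)\<bar> \<le> \<bar>\<tau> p (fst i) (snd i) - \<tau> p (fst j) (snd j)\<bar>"
        using sep[of p "fst i" "snd i" "fst j" "snd j"] p i j ne gi gj xi by (auto simp: prod_eq_iff)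
    qed
    also have "(\<Sum>i\<in>Q \<times> R. (cmod (G p (fst i) (snd i)))\<^sup>2) = (\<Sum>q\<in>Q. \<Sum>r\<in>R. (cmod (G p q r))\<^sup>2)"
      by (simp add: sum.cartesian_product split_def)
    finally show ?thesis .
  qed
  have "integral {0..T} (\<lambda>t. integral {0..2*pi} (\<lambda>x. (cmod (Ft t x))\<^sup>2))
     \<le> integral {0..T} (\<lambda>t. real (card P) * (\<Sum>p\<in>P. integral {0..2*pi} (\<lambda>x. (cmod (Fp p t x))\<^sup>2)))"
    by (rule integral_le[OF intTt _ inner]) (intro integrable_on_mult_right integrable_sum fP intTp)
  also have "\<dots> = real (card P) * (\<Sum>p\<in>P. integral {0..T} (\<lambda>t. integral {0..2*pi} (\<lambda>x. (cmod (Fp p t x))\<^sup>2)))"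
    by (simp add: integral_sum[OF fP intTp])
  also have "\<dots> \<le> real (card P) * (\<Sum>p\<in>P. 36 * pi * (T + 1 / S) * (\<Sum>q\<in>Q. \<Sum>r\<in>R. (cmod (G p q r))\<^sup>2))"
    by (intro mult_left_mono sum_mono bp) auto
  also have "\<dots> = real (card P) * (36 * pi * (T + 1 / S)) * (\<Sum>p\<in>P. \<Sum>q\<in>Q. \<Sum>r\<in>R. (cmod (G p q r))\<^sup>2)"
    by (simp add: sum_distrib_left sum_distrib_right mult_ac)
  finally show ?thesis unfolding eF .
qed

lemma sp:
  fixes e s r r' q q' N1 N :: int
  assumes e: "e = 1 \<or> e = -1" and s: "s = 1 \<or> s = -1"
    and eq: "e*r + s*q = e*r' + s*q'" and ne: "(q,r) \<noteq> (q',r')"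
    and r: "N1 \<le> 2*\<bar>r\<bar>" and q: "\<bar>q\<bar> \<le> 2*N" "\<bar>q'\<bar> \<le> 2*N" and N: "16*N \<le> N1"
  shows "q \<noteq> q' \<and> N1 * \<bar>q - q'\<bar> \<le> 2 * \<bar>(e*r^2 + s*q^2) - (e*r'^2 + s*q'^2)\<bar>"
proof -
  have r': "r' = r + e * s * (q - q')" using e s eq by (elim disjE) (auto simp: algebra_simps)
  have id: "(e*r^2 + s*q^2) - (e*r'^2 + s*q'^2) = s*(q-q')*(q+q'-r-r')"
    using e s by (elim disjE) (simp_all add: r' power2_eq_square algebra_simps)
  have es: "\<bar>e * s * (q - q')\<bar> = \<bar>q-q'\<bar>" using e s by (elim disjE) auto
  have "\<bar>r + r'\<bar> \<ge> 2*\<bar>r\<bar> - \<bar>q - q'\<bar>" unfolding r' using es by linarith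
  moreover have "\<bar>q - q'\<bar> \<le> \<bar>q\<bar> + \<bar>q'\<bar>" by (rule abs_triangle_ineq4)
  moreover have "\<bar>q + q'\<bar> \<le> \<bar>q\<bar> + \<bar>q'\<bar>" by (rule abs_triangle_ineq)
  moreover have "\<bar>r + r'\<bar> - \<bar>q + q'\<bar> \<le> \<bar>q+q'-r-r'\<bar>"
    using abs_triangle_ineq2[of "r + r'" "q + q'"] by (simp add: abs_minus_commute algebra_simps)
  ultimately have big: "N1 \<le> 2 * \<bar>q+q'-r-r'\<bar>" using r q N by linarith
  have qq: "q \<noteq> q'"
  proof
    assume "q = q'"
    then have "r = r'" using r' by simp
    with \<open>q = q'\<close> ne show False by simp
  qed
  have "N1 * \<bar>q - q'\<bar> \<le> 2 * \<bar>q+q'-r-r'\<bar> * \<bar>q - q'\<bar>"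
    using big by (simp add: mult_right_mono)
  also have "\<dots> = 2 * \<bar>s*(q-q')*(q+q'-r-r')\<bar>" using s by (elim disjE) (auto simp: abs_mult)
  finally show ?thesis using qq id by simp
qed

lemma LBINT0:
  fixes f :: "real \<Rightarrow> real"
  assumes "0 \<le> b" "continuous_on {0..b} f"
  shows "(LBINT x=0..b. f x) = integral {0..b} f"
  using interval_integral_eq_integral[of 0 b f] assms by (simp add: zero_ereal_def borel_integrable_atLeastAtMost')

lemma cont_Q: "finite I \<Longrightarrow> continuous_on A (\<lambda>x. (cmod (\<Sum>i\<in>I. G i * cis (real_of_int (\<xi> i) * x - \<tau> i * t)))\<^sup>2)"
  by (intro continuous_intros)

lemma LBINT_Q:
  fixes G :: "'a \<Rightarrow> complex" and \<xi> :: "'a \<Rightarrow> int" and \<tau> :: "'a \<Rightarrow> real"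
  assumes fin: "finite I" and T: "0 \<le> T"
  shows "(LBINT t=0..T. (LBINT x=0..2*pi. (cmod (\<Sum>i\<in>I. G i * cis (real_of_int (\<xi> i) * x - \<tau> i * t)))\<^sup>2))
    = integral {0..T} (\<lambda>t. integral {0..2*pi} (\<lambda>x. (cmod (\<Sum>i\<in>I. G i * cis (real_of_int (\<xi> i) * x - \<tau> i * t)))\<^sup>2))"
proof -
  have inner: "(LBINT x=0..2*pi. (cmod (\<Sum>i\<in>I. G i * cis (real_of_int (\<xi> i) * x - \<tau> i * t)))\<^sup>2)
    = integral {0..2*pi} (\<lambda>x. (cmod (\<Sum>i\<in>I. G i * cis (real_of_int (\<xi> i) * x - \<tau> i * t)))\<^sup>2)" for t
    by (rule LBINT0) (auto intro!: cont_Q fin)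
  have e: "integral {0..2*pi} (\<lambda>x. (cmod (\<Sum>i\<in>I. G i * cis (real_of_int (\<xi> i) * x - \<tau> i * t)))\<^sup>2) =
    Re (\<Sum>p\<in>I \<times> I. (complex_of_real (2*pi) * (if \<xi> (fst p) = \<xi> (snd p) then G (fst p) * cnj (G (snd p)) else 0))
          * cis ((\<tau> (snd p) - \<tau> (fst p)) * t))" for t
    by (rule integral_unique[OF Q_has_integral[OF fin]])
  show ?thesis unfolding inner e
    by (rule LBINT0) (use T fin in \<open>auto intro!: continuous_intros\<close>)
qed

lemma L2T_schr: "L2T (schr N c 0) = sqrt (2 * pi * (\<Sum>n\<in>{-2 * int N..2 * int N}. (cmod (c n))\<^sup>2))"
proof -
  have e: "schr N c 0 x = (\<Sum>n\<in>{-2 * int N..2 * int N}. c n * cis (real_of_int (id n) * x))" for x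
    by (simp add: schr_def)
  have H: "((\<lambda>x. (cmod (schr N c 0 x))\<^sup>2) has_integral 2 * pi * (\<Sum>n\<in>{-2 * int N..2 * int N}. (cmod (c n))\<^sup>2)) {0..2*pi}"
  proof -
    have "(\<Sum>i\<in>{-2 * int N..2 * int N}. \<Sum>j\<in>{-2 * int N..2 * int N}. if id i = id j then c i * cnj (c j) else 0)
       = (\<Sum>i\<in>{-2 * int N..2 * int N}. c i * cnj (c i))"
      by (simp add: if_distrib sum.delta cong: if_cong)
    also have "Re \<dots> = (\<Sum>n\<in>{-2 * int N..2 * int N}. (cmod (c n))\<^sup>2)"
      by (simp add: Re_sum complex_norm_square[symmetric] del: complex_norm_square)
    finally show ?thesis unfolding e using orth_has_integral[of "{-2 * int N..2 * int N}" c id] by simp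
  qed
  have "(LBINT x=0..2*pi. (cmod (schr N c 0 x))\<^sup>2) = integral {0..2*pi} (\<lambda>x. (cmod (schr N c 0 x))\<^sup>2)"
    by (rule LBINT0) (auto intro!: continuous_intros simp: e)
  then show ?thesis unfolding L2T_def using integral_unique[OF H] by simp
qed

lemma lemB_LBINT:
  fixes G :: "int \<Rightarrow> int \<Rightarrow> int \<Rightarrow> complex" and \<xi> :: "int \<Rightarrow> int \<Rightarrow> int \<Rightarrow> int" and \<tau> :: "int \<Rightarrow> int \<Rightarrow> int \<Rightarrow> real"
  assumes fP: "finite P" and fQ: "finite Q" and fR: "finite R" and S: "0 < S" and T: "0 \<le> T"
    and sep: "\<And>p q r q' r'. p \<in> P \<Longrightarrow> q \<in> Q \<Longrightarrow> r \<in> R \<Longrightarrow> q' \<in> Q \<Longrightarrow> r' \<in> R \<Longrightarrow> (q, r) \<noteq> (q', r')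
      \<Longrightarrow> G p q r \<noteq> 0 \<Longrightarrow> G p q' r' \<noteq> 0 \<Longrightarrow> \<xi> p q r = \<xi> p q' r'
      \<Longrightarrow> q \<noteq> q' \<and> S * \<bar>real_of_int (q - q')\<bar> \<le> \<bar>\<tau> p q r - \<tau> p q' r'\<bar>"
  shows "(LBINT t=0..T. (LBINT x=0..2*pi. (cmod (\<Sum>p\<in>P. \<Sum>q\<in>Q. \<Sum>r\<in>R.
            G p q r * cis (real_of_int (\<xi> p q r) * x - \<tau> p q r * t)))\<^sup>2))
     \<le> real (card P) * (36 * pi * (T + 1 / S)) * (\<Sum>p\<in>P. \<Sum>q\<in>Q. \<Sum>r\<in>R. (cmod (G p q r))\<^sup>2)"
proof -
  define Ft where "Ft t x = (\<Sum>i\<in>P \<times> (Q \<times> R). G (fst i) (fst (snd i)) (snd (snd i)) *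
       cis (real_of_int (\<xi> (fst i) (fst (snd i)) (snd (snd i))) * x - \<tau> (fst i) (fst (snd i)) (snd (snd i)) * t))" for t x
  have eF: "(\<Sum>p\<in>P. \<Sum>q\<in>Q. \<Sum>r\<in>R. G p q r * cis (real_of_int (\<xi> p q r) * x - \<tau> p q r * t)) = Ft t x" for t x
    unfolding Ft_def by (simp add: sum.cartesian_product split_def)
  have fPQR: "finite (P \<times> (Q \<times> R))" using fP fQ fR by simp
  have "(LBINT t=0..T. (LBINT x=0..2*pi. (cmod (\<Sum>p\<in>P. \<Sum>q\<in>Q. \<Sum>r\<in>R.
            G p q r * cis (real_of_int (\<xi> p q r) * x - \<tau> p q r * t)))\<^sup>2))
     = (LBINT t=0..T. (LBINT x=0..2*pi. (cmod (Ft t x))\<^sup>2))" by (simp only: eF)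
  also have "\<dots> = integral {0..T} (\<lambda>t. integral {0..2*pi} (\<lambda>x. (cmod (Ft t x))\<^sup>2))"
    unfolding Ft_def by (rule LBINT_Q[OF fPQR T])
  also have "\<dots> = integral {0..T} (\<lambda>t. integral {0..2*pi} (\<lambda>x. (cmod (\<Sum>p\<in>P. \<Sum>q\<in>Q. \<Sum>r\<in>R.
            G p q r * cis (real_of_int (\<xi> p q r) * x - \<tau> p q r * t)))\<^sup>2))" by (simp only: eF)
  also have "\<dots> \<le> real (card P) * (36 * pi * (T + 1 / S)) * (\<Sum>p\<in>P. \<Sum>q\<in>Q. \<Sum>r\<in>R. (cmod (G p q r))\<^sup>2)"
    by (rule lemB[OF fP fQ fR S T sep]) 
  finally show ?thesis .
qed

lemma sum3_bound:
  fixes a b c :: "int \<Rightarrow> complex" and s :: "int \<Rightarrow> int \<Rightarrow> complex"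
  assumes sB: "\<And>p q. cmod (s p q) \<le> B"
  shows "(\<Sum>p\<in>P. \<Sum>q\<in>Q. \<Sum>r\<in>R. (cmod (a r * s p q * b q * c p))\<^sup>2)
     \<le> B\<^sup>2 * ((\<Sum>r\<in>R. (cmod (a r))\<^sup>2) * (\<Sum>q\<in>Q. (cmod (b q))\<^sup>2) * (\<Sum>p\<in>P. (cmod (c p))\<^sup>2))"
proof -
  have "(\<Sum>p\<in>P. \<Sum>q\<in>Q. \<Sum>r\<in>R. (cmod (a r * s p q * b q * c p))\<^sup>2)
     \<le> (\<Sum>p\<in>P. \<Sum>q\<in>Q. \<Sum>r\<in>R. B\<^sup>2 * ((cmod (a r))\<^sup>2 * (cmod (b q))\<^sup>2 * (cmod (c p))\<^sup>2))"
  proof (intro sum_mono)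
    fix p q r
    have "(cmod (s p q))\<^sup>2 \<le> B\<^sup>2" using sB[of p q] by (simp add: power_mono)
    then have "(cmod (s p q))\<^sup>2 * ((cmod (a r))\<^sup>2 * (cmod (b q))\<^sup>2 * (cmod (c p))\<^sup>2) \<le> B\<^sup>2 * ((cmod (a r))\<^sup>2 * (cmod (b q))\<^sup>2 * (cmod (c p))\<^sup>2)"
      by (rule mult_right_mono) simp
    then show "(cmod (a r * s p q * b q * c p))\<^sup>2 \<le> B\<^sup>2 * ((cmod (a r))\<^sup>2 * (cmod (b q))\<^sup>2 * (cmod (c p))\<^sup>2)"
      by (simp add: norm_mult power_mult_distrib mult_ac)
  qed
  also have "\<dots> = B\<^sup>2 * ((\<Sum>r\<in>R. (cmod (a r))\<^sup>2) * (\<Sum>q\<in>Q. (cmod (b q))\<^sup>2) * (\<Sum>p\<in>P. (cmod (c p))\<^sup>2))"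
  proof -
    define X where "X r = (cmod (a r))\<^sup>2" for r
    define Y where "Y q = (cmod (b q))\<^sup>2" for q
    define Z where "Z p = (cmod (c p))\<^sup>2" for p
    have s1: "(\<Sum>r\<in>R. B\<^sup>2 * (X r * Y q * Z p)) = (B\<^sup>2 * Z p * sum X R) * Y q" for p q
      by (simp add: sum_distrib_left sum_distrib_right mult_ac)
    have s2: "(\<Sum>q\<in>Q. (B\<^sup>2 * Z p * sum X R) * Y q) = (B\<^sup>2 * sum X R * sum Y Q) * Z p" for p
      by (simp only: sum_distrib_left[symmetric]) (simp add: mult_ac)
    have s3: "(\<Sum>p\<in>P. (B\<^sup>2 * sum X R * sum Y Q) * Z p) = B\<^sup>2 * (sum X R * sum Y Q * sum Z P)"
    proof -
      have "(\<Sum>p\<in>P. (B\<^sup>2 * sum X R * sum Y Q) * Z p) = (B\<^sup>2 * sum X R * sum Y Q) * sum Z P"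
        by (rule sum_distrib_left[symmetric])
      then show ?thesis by (simp add: mult_ac)
    qed
    show ?thesis unfolding X_def[symmetric] Y_def[symmetric] Z_def[symmetric] s1 s2 s3 ..
  qed
  finally show ?thesis .
qed

lemma expand_prod:
  fixes a c2 c3 \<sigma> :: "int \<Rightarrow> complex" and e :: int
  shows "(\<Sum>r\<in>R1. a r * cis (real_of_int (e*r) * x - real_of_int (e*r^2) * t)) * mult_prod \<sigma> N2 c2 N3 c3 t x
    = (\<Sum>r\<in>R1. \<Sum>n\<in>{-2 * int N2..2 * int N2}. \<Sum>m\<in>{-2 * int N3..2 * int N3}.
        a r * \<sigma> (n - m) * c2 n * cnj (c3 m) * cis (real_of_int (e*r + n - m) * x - real_of_int (e*r^2 + n^2 - m^2) * t))"
proof -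
  have arg: "real_of_int (e*r) * x - real_of_int (e*r^2) * t + (real_of_int (n - m) * x - ((real_of_int n)\<^sup>2 - (real_of_int m)\<^sup>2) * t)
     = real_of_int (e*r + n - m) * x - real_of_int (e*r^2 + n^2 - m^2) * t" for r n m
    by (simp add: algebra_simps)
  show ?thesis
    unfolding mult_prod_def sum_distrib_right
    unfolding sum_distrib_left
  proof (intro sum.cong refl)
    fix r n m
    have k: "cis (real_of_int (e*r) * x - real_of_int (e*r^2) * t) * cis (real_of_int (n - m) * x - ((real_of_int n)\<^sup>2 - (real_of_int m)\<^sup>2) * t)
      = cis (real_of_int (e*r + n - m) * x - real_of_int (e*r^2 + n^2 - m^2) * t)"
      unfolding cis_mult arg ..
    have "a r * cis (real_of_int (e*r) * x - real_of_int (e*r^2) * t) * (\<sigma> (n - m) * c2 n * cnj (c3 m) * cis (real_of_int (n - m) * x - ((real_of_int n)\<^sup>2 - (real_of_int m)\<^sup>2) * t))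
      = a r * \<sigma> (n - m) * c2 n * cnj (c3 m) * (cis (real_of_int (e*r) * x - real_of_int (e*r^2) * t) * cis (real_of_int (n - m) * x - ((real_of_int n)\<^sup>2 - (real_of_int m)\<^sup>2) * t))"
      by (simp only: mult_ac)
    also have "\<dots> = a r * \<sigma> (n - m) * c2 n * cnj (c3 m) * cis (real_of_int (e*r + n - m) * x - real_of_int (e*r^2 + n^2 - m^2) * t)"
      by (simp only: k)
    finally show "a r * cis (real_of_int (e*r) * x - real_of_int (e*r^2) * t) * (\<sigma> (n - m) * c2 n * cnj (c3 m) * cis (real_of_int (n - m) * x - ((real_of_int n)\<^sup>2 - (real_of_int m)\<^sup>2) * t))
      = a r * \<sigma> (n - m) * c2 n * cnj (c3 m) * cis (real_of_int (e*r + n - m) * x - real_of_int (e*r^2 + n^2 - m^2) * t)" .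
  qed
qed

lemma main_gen:
  fixes N1 N2 N3 :: nat and a c2 c3 \<sigma> :: "int \<Rightarrow> complex" and e :: int and \<delta> B :: real
  assumes e: "e = 1 \<or> e = -1" and N2: "1 \<le> N2" and N3: "1 \<le> N3"
    and big2: "16 * N2 \<le> N1" and big3: "16 * N3 \<le> N1"
    and supp: "\<And>n. a n \<noteq> 0 \<Longrightarrow> int N1 \<le> 2 * \<bar>n\<bar>"
    and \<delta>: "0 \<le> \<delta>" and sB: "\<And>k. cmod (\<sigma> k) \<le> B"
  shows "(LBINT t=0..\<delta>. (LBINT x=0..2*pi. (cmod ((\<Sum>r\<in>{-2 * int N1..2 * int N1}. a r * cis (real_of_int (e*r) * x - real_of_int (e*r^2) * t))
             * mult_prod \<sigma> N2 c2 N3 c3 t x))\<^sup>2))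
    \<le> real (4 * min N2 N3 + 1) * (36 * pi * (\<delta> + 1 / (real N1 / 2))) *
       (B\<^sup>2 * ((\<Sum>n\<in>{-2 * int N1..2 * int N1}. (cmod (a n))\<^sup>2) * (\<Sum>n\<in>{-2 * int N2..2 * int N2}. (cmod (c2 n))\<^sup>2)
          * (\<Sum>n\<in>{-2 * int N3..2 * int N3}. (cmod (c3 n))\<^sup>2)))"
proof -
  let ?R1 = "{-2 * int N1..2 * int N1}" and ?R2 = "{-2 * int N2..2 * int N2}" and ?R3 = "{-2 * int N3..2 * int N3}"
  have S: "0 < real N1 / 2" using big2 N2 by simp
  have N1big: "N1 \<ge> 16" using big2 N2 by linarith
  have card3: "card ?R3 = 4 * N3 + 1" by simp
  have card2: "card ?R2 = 4 * N2 + 1" by simp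
  show ?thesis
  proof (cases "N3 \<le> N2")
    case True
    define G where "G p q r = a r * \<sigma> (q - p) * c2 q * cnj (c3 p)" for p q r
    define \<xi> where "\<xi> p q r = e*r + q - p" for p q r :: int
    define \<tau> where "\<tau> p q r = real_of_int (e*r^2 + q^2 - p^2)" for p q r :: int
    have re: "(\<Sum>r\<in>?R1. \<Sum>n\<in>?R2. \<Sum>m\<in>?R3.
        a r * \<sigma> (n - m) * c2 n * cnj (c3 m) * cis (real_of_int (e*r + n - m) * x - real_of_int (e*r^2 + n^2 - m^2) * t))
      = (\<Sum>p\<in>?R3. \<Sum>q\<in>?R2. \<Sum>r\<in>?R1. G p q r * cis (real_of_int (\<xi> p q r) * x - \<tau> p q r * t))" for t x
    proof -
      have "(\<Sum>r\<in>?R1. \<Sum>n\<in>?R2. \<Sum>m\<in>?R3.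
        a r * \<sigma> (n - m) * c2 n * cnj (c3 m) * cis (real_of_int (e*r + n - m) * x - real_of_int (e*r^2 + n^2 - m^2) * t))
        = (\<Sum>n\<in>?R2. \<Sum>r\<in>?R1. \<Sum>m\<in>?R3.
        a r * \<sigma> (n - m) * c2 n * cnj (c3 m) * cis (real_of_int (e*r + n - m) * x - real_of_int (e*r^2 + n^2 - m^2) * t))"
        by (rule sum.swap)
      also have "\<dots> = (\<Sum>n\<in>?R2. \<Sum>m\<in>?R3. \<Sum>r\<in>?R1.
        a r * \<sigma> (n - m) * c2 n * cnj (c3 m) * cis (real_of_int (e*r + n - m) * x - real_of_int (e*r^2 + n^2 - m^2) * t))"
        by (intro sum.cong refl sum.swap)
      also have "\<dots> = (\<Sum>m\<in>?R3. \<Sum>n\<in>?R2. \<Sum>r\<in>?R1.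
        a r * \<sigma> (n - m) * c2 n * cnj (c3 m) * cis (real_of_int (e*r + n - m) * x - real_of_int (e*r^2 + n^2 - m^2) * t))"
        by (rule sum.swap)
      finally show ?thesis by (simp add: G_def \<xi>_def \<tau>_def)
    qed
    have "(LBINT t=0..\<delta>. (LBINT x=0..2*pi. (cmod (\<Sum>p\<in>?R3. \<Sum>q\<in>?R2. \<Sum>r\<in>?R1. G p q r * cis (real_of_int (\<xi> p q r) * x - \<tau> p q r * t)))\<^sup>2))
      \<le> real (card ?R3) * (36 * pi * (\<delta> + 1 / (real N1 / 2))) * (\<Sum>p\<in>?R3. \<Sum>q\<in>?R2. \<Sum>r\<in>?R1. (cmod (G p q r))\<^sup>2)"
    proof (rule lemB_LBINT[OF _ _ _ S \<delta>])
      fix p q r q' r'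
      assume q: "q \<in> ?R2" and r: "r \<in> ?R1" and q': "q' \<in> ?R2" and r': "r' \<in> ?R1" and ne: "(q, r) \<noteq> (q', r')"
        and g: "G p q r \<noteq> 0" and g': "G p q' r' \<noteq> 0" and xi: "\<xi> p q r = \<xi> p q' r'"
      have ar: "int N1 \<le> 2 * \<bar>r\<bar>" using supp g by (auto simp: G_def)
      have ar': "int N1 \<le> 2 * \<bar>r'\<bar>" using supp g' by (auto simp: G_def)
      have eq: "e*r + 1*q = e*r' + 1*q'" using xi by (simp add: \<xi>_def)
      have qb: "\<bar>q\<bar> \<le> 2 * int N2" "\<bar>q'\<bar> \<le> 2 * int N2" using q q' by auto
      from sp[OF e _ eq ne ar qb] big2
      have H: "q \<noteq> q' \<and> int N1 * \<bar>q - q'\<bar> \<le> 2 * \<bar>e * r\<^sup>2 + 1 * q\<^sup>2 - (e * r'\<^sup>2 + 1 * q'\<^sup>2)\<bar>" by simp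
      have "real N1 * \<bar>real_of_int (q - q')\<bar> \<le> 2 * \<bar>\<tau> p q r - \<tau> p q' r'\<bar>"
      proof -
        have "real_of_int (int N1 * \<bar>q - q'\<bar>) \<le> real_of_int (2 * \<bar>e * r\<^sup>2 + 1 * q\<^sup>2 - (e * r'\<^sup>2 + 1 * q'\<^sup>2)\<bar>)"
          using H of_int_le_iff by blast
        moreover have "\<tau> p q r - \<tau> p q' r' = real_of_int (e * r\<^sup>2 + 1 * q\<^sup>2 - (e * r'\<^sup>2 + 1 * q'\<^sup>2))"
          by (simp add: \<tau>_def)
        ultimately show ?thesis by simp
      qed
      then show "q \<noteq> q' \<and> real N1 / 2 * \<bar>real_of_int (q - q')\<bar> \<le> \<bar>\<tau> p q r - \<tau> p q' r'\<bar>"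
        using H by simp
    qed auto
    also have "\<dots> \<le> real (4 * min N2 N3 + 1) * (36 * pi * (\<delta> + 1 / (real N1 / 2))) *
       (B\<^sup>2 * ((\<Sum>n\<in>?R1. (cmod (a n))\<^sup>2) * (\<Sum>n\<in>?R2. (cmod (c2 n))\<^sup>2) * (\<Sum>n\<in>?R3. (cmod (c3 n))\<^sup>2)))"
    proof -
      have "(\<Sum>p\<in>?R3. \<Sum>q\<in>?R2. \<Sum>r\<in>?R1. (cmod (G p q r))\<^sup>2)
        \<le> B\<^sup>2 * ((\<Sum>n\<in>?R1. (cmod (a n))\<^sup>2) * (\<Sum>n\<in>?R2. (cmod (c2 n))\<^sup>2) * (\<Sum>n\<in>?R3. (cmod (cnj (c3 n)))\<^sup>2))"
        unfolding G_def by (rule sum3_bound[where s="\<lambda>p q. \<sigma> (q - p)"]) (rule sB)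
      then have b: "(\<Sum>p\<in>?R3. \<Sum>q\<in>?R2. \<Sum>r\<in>?R1. (cmod (G p q r))\<^sup>2)
        \<le> B\<^sup>2 * ((\<Sum>n\<in>?R1. (cmod (a n))\<^sup>2) * (\<Sum>n\<in>?R2. (cmod (c2 n))\<^sup>2) * (\<Sum>n\<in>?R3. (cmod (c3 n))\<^sup>2))"
        by simp
      have ce: "real (card ?R3) = real (4 * min N2 N3 + 1)" using True card3 by (simp add: min_def)
      show ?thesis unfolding ce by (rule mult_left_mono[OF b]) (use \<delta> S in simp)
    qed
    finally show ?thesis by (simp only: expand_prod re)
  next
    case False
    define G where "G p q r = a r * \<sigma> (p - q) * cnj (c3 q) * c2 p" for p q r
    define \<xi> where "\<xi> p q r = e*r + p - q" for p q r :: int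
    define \<tau> where "\<tau> p q r = real_of_int (e*r^2 + p^2 - q^2)" for p q r :: int
    have re: "(\<Sum>r\<in>?R1. \<Sum>n\<in>?R2. \<Sum>m\<in>?R3.
        a r * \<sigma> (n - m) * c2 n * cnj (c3 m) * cis (real_of_int (e*r + n - m) * x - real_of_int (e*r^2 + n^2 - m^2) * t))
      = (\<Sum>p\<in>?R2. \<Sum>q\<in>?R3. \<Sum>r\<in>?R1. G p q r * cis (real_of_int (\<xi> p q r) * x - \<tau> p q r * t))" for t x
    proof -
      have "(\<Sum>r\<in>?R1. \<Sum>n\<in>?R2. \<Sum>m\<in>?R3.
        a r * \<sigma> (n - m) * c2 n * cnj (c3 m) * cis (real_of_int (e*r + n - m) * x - real_of_int (e*r^2 + n^2 - m^2) * t))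
        = (\<Sum>n\<in>?R2. \<Sum>r\<in>?R1. \<Sum>m\<in>?R3.
        a r * \<sigma> (n - m) * c2 n * cnj (c3 m) * cis (real_of_int (e*r + n - m) * x - real_of_int (e*r^2 + n^2 - m^2) * t))"
        by (rule sum.swap)
      also have "\<dots> = (\<Sum>n\<in>?R2. \<Sum>m\<in>?R3. \<Sum>r\<in>?R1.
        a r * \<sigma> (n - m) * c2 n * cnj (c3 m) * cis (real_of_int (e*r + n - m) * x - real_of_int (e*r^2 + n^2 - m^2) * t))"
        by (intro sum.cong refl sum.swap)
      finally show ?thesis by (simp add: G_def \<xi>_def \<tau>_def mult_ac)
    qed
    have "(LBINT t=0..\<delta>. (LBINT x=0..2*pi. (cmod (\<Sum>p\<in>?R2. \<Sum>q\<in>?R3. \<Sum>r\<in>?R1. G p q r * cis (real_of_int (\<xi> p q r) * x - \<tau> p q r * t)))\<^sup>2))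
      \<le> real (card ?R2) * (36 * pi * (\<delta> + 1 / (real N1 / 2))) * (\<Sum>p\<in>?R2. \<Sum>q\<in>?R3. \<Sum>r\<in>?R1. (cmod (G p q r))\<^sup>2)"
    proof (rule lemB_LBINT[OF _ _ _ S \<delta>])
      fix p q r q' r'
      assume q: "q \<in> ?R3" and r: "r \<in> ?R1" and q': "q' \<in> ?R3" and r': "r' \<in> ?R1" and ne: "(q, r) \<noteq> (q', r')"
        and g: "G p q r \<noteq> 0" and g': "G p q' r' \<noteq> 0" and xi: "\<xi> p q r = \<xi> p q' r'"
      have ar: "int N1 \<le> 2 * \<bar>r\<bar>" using supp g by (auto simp: G_def)
      have ar': "int N1 \<le> 2 * \<bar>r'\<bar>" using supp g' by (auto simp: G_def)
      have eq: "e*r + (-1)*q = e*r' + (-1)*q'" using xi by (simp add: \<xi>_def)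
      have qb: "\<bar>q\<bar> \<le> 2 * int N3" "\<bar>q'\<bar> \<le> 2 * int N3" using q q' by auto
      from sp[OF e _ eq ne ar qb] big3
      have H: "q \<noteq> q' \<and> int N1 * \<bar>q - q'\<bar> \<le> 2 * \<bar>e * r\<^sup>2 + (-1) * q\<^sup>2 - (e * r'\<^sup>2 + (-1) * q'\<^sup>2)\<bar>" by simp
      have "real N1 * \<bar>real_of_int (q - q')\<bar> \<le> 2 * \<bar>\<tau> p q r - \<tau> p q' r'\<bar>"
      proof -
        have "real_of_int (int N1 * \<bar>q - q'\<bar>) \<le> real_of_int (2 * \<bar>e * r\<^sup>2 + (-1) * q\<^sup>2 - (e * r'\<^sup>2 + (-1) * q'\<^sup>2)\<bar>)"
          using H of_int_le_iff by blast
        moreover have "\<tau> p q r - \<tau> p q' r' = real_of_int (e * r\<^sup>2 + (-1) * q\<^sup>2 - (e * r'\<^sup>2 + (-1) * q'\<^sup>2))"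
          by (simp add: \<tau>_def)
        ultimately show ?thesis by simp
      qed
      then show "q \<noteq> q' \<and> real N1 / 2 * \<bar>real_of_int (q - q')\<bar> \<le> \<bar>\<tau> p q r - \<tau> p q' r'\<bar>"
        using H by simp
    qed auto
    also have "\<dots> \<le> real (4 * min N2 N3 + 1) * (36 * pi * (\<delta> + 1 / (real N1 / 2))) *
       (B\<^sup>2 * ((\<Sum>n\<in>?R1. (cmod (a n))\<^sup>2) * (\<Sum>n\<in>?R2. (cmod (c2 n))\<^sup>2) * (\<Sum>n\<in>?R3. (cmod (c3 n))\<^sup>2)))"
    proof -
      have "(\<Sum>p\<in>?R2. \<Sum>q\<in>?R3. \<Sum>r\<in>?R1. (cmod (G p q r))\<^sup>2)
        \<le> B\<^sup>2 * ((\<Sum>n\<in>?R1. (cmod (a n))\<^sup>2) * (\<Sum>n\<in>?R3. (cmod (cnj (c3 n)))\<^sup>2) * (\<Sum>n\<in>?R2. (cmod (c2 n))\<^sup>2))"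
        unfolding G_def by (rule sum3_bound[where s="\<lambda>p q. \<sigma> (p - q)"]) (rule sB)
      then have b: "(\<Sum>p\<in>?R2. \<Sum>q\<in>?R3. \<Sum>r\<in>?R1. (cmod (G p q r))\<^sup>2)
        \<le> B\<^sup>2 * ((\<Sum>n\<in>?R1. (cmod (a n))\<^sup>2) * (\<Sum>n\<in>?R2. (cmod (c2 n))\<^sup>2) * (\<Sum>n\<in>?R3. (cmod (c3 n))\<^sup>2))"
        by (simp add: mult_ac)
      have ce: "real (card ?R2) = real (4 * min N2 N3 + 1)" using False card2 by (simp add: min_def)
      show ?thesis unfolding ce by (rule mult_left_mono[OF b]) (use \<delta> S in simp)
    qed
    finally show ?thesis by (simp only: expand_prod re)
  qed
qed

lemma final_arith:
  fixes m N1 \<delta> c B A1 A2 A3 :: real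
  assumes m: "1 \<le> m" and N1: "0 < N1" and d0: "0 \<le> \<delta>" and d1: "\<delta> \<le> c / N1" and c: "0 < c" and B: "0 \<le> B"
    and A1: "0 \<le> A1" and A2: "0 \<le> A2" and A3: "0 \<le> A3"
  shows "sqrt ((4 * m + 1) * (36 * pi * (\<delta> + 1 / (N1 / 2))) * (B\<^sup>2 * (A1 * A2 * A3)))
    \<le> 2 * (c + 2) * (B + 1) * sqrt (m / N1) * sqrt (2 * pi * A1) * sqrt (2 * pi * A2) * sqrt (2 * pi * A3)"
proof -
  define A where "A = A1 * A2 * A3"
  have A: "0 \<le> A" using A1 A2 A3 by (simp add: A_def)
  define Z where "Z = A * (m / N1)"
  have Z: "0 \<le> Z" using A m N1 by (simp add: Z_def)
  have R: "2 * (c + 2) * (B + 1) * sqrt (m / N1) * sqrt (2 * pi * A1) * sqrt (2 * pi * A2) * sqrt (2 * pi * A3)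
     = sqrt ((2 * (c + 2) * (B + 1))\<^sup>2 * (m / N1) * (2 * pi * A1) * (2 * pi * A2) * (2 * pi * A3))"
  proof -
    have "sqrt ((2 * (c + 2) * (B + 1))\<^sup>2 * (m / N1) * (2 * pi * A1) * (2 * pi * A2) * (2 * pi * A3))
      = sqrt ((2 * (c + 2) * (B + 1))\<^sup>2) * sqrt (m / N1) * sqrt (2 * pi * A1) * sqrt (2 * pi * A2) * sqrt (2 * pi * A3)"
      by (simp only: real_sqrt_mult)
    moreover have "sqrt ((2 * (c + 2) * (B + 1))\<^sup>2) = 2 * (c + 2) * (B + 1)"
      using c B by (simp only: real_sqrt_abs) simp
    ultimately show ?thesis by simp
  qed
  have L1: "\<delta> + 1 / (N1 / 2) \<le> (c + 2) / N1" using d1 N1 by (simp add: add_divide_distrib)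
  have L2: "4 * m + 1 \<le> 5 * m" using m by simp
  have "(4 * m + 1) * (36 * pi * (\<delta> + 1 / (N1 / 2))) \<le> (5 * m) * (36 * pi * ((c + 2) / N1))"
  proof -
    have L3: "36 * pi * (\<delta> + 1 / (N1 / 2)) \<le> 36 * pi * ((c + 2) / N1)" by (rule mult_left_mono[OF L1]) simp
    have nn: "0 \<le> 36 * pi * (\<delta> + 1 / (N1 / 2))" using d0 N1 by simp
    show ?thesis using mult_mono[OF L2 L3 _ nn] m by simp
  qed
  then have "(4 * m + 1) * (36 * pi * (\<delta> + 1 / (N1 / 2))) * (B\<^sup>2 * A) \<le> (5 * m) * (36 * pi * ((c + 2) / N1)) * (B\<^sup>2 * A)"
    by (rule mult_right_mono) (use A in simp)
  also have "\<dots> = (180 * pi * (c + 2) * B\<^sup>2) * Z" by (simp add: Z_def field_simps)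
  also have "\<dots> \<le> (32 * pi ^ 3 * (c + 2)\<^sup>2 * (B + 1)\<^sup>2) * Z"
  proof (rule mult_right_mono[OF _ Z])
    have p9: "9 \<le> pi\<^sup>2"
    proof -
      have "3 * 3 \<le> pi * pi" by (rule mult_mono) (use pi_gt3 in auto)
      then show ?thesis by (simp add: power2_eq_square)
    qed
    have c2: "2 \<le> c + 2" using c by simp
    have b: "B\<^sup>2 \<le> (B + 1)\<^sup>2" using B by (simp add: power_mono)
    have "180 * pi * (c + 2) * B\<^sup>2 \<le> 288 * pi * (c + 2) * B\<^sup>2" using c by (simp add: mult_right_mono)
    also have "\<dots> \<le> 144 * pi * ((c + 2) * (c + 2)) * (B + 1)\<^sup>2"
    proof -
      have "(c + 2) * 2 \<le> (c + 2) * (c + 2)" by (rule mult_left_mono[OF c2]) (use c in simp)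
      then have h2: "(c + 2) * 2 * (144 * pi * B\<^sup>2) \<le> (c + 2) * (c + 2) * (144 * pi * B\<^sup>2)"
        by (rule mult_right_mono) simp
      have "288 * pi * (c + 2) * B\<^sup>2 = (c + 2) * 2 * (144 * pi * B\<^sup>2)" by simp
      also have "\<dots> \<le> (c + 2) * (c + 2) * (144 * pi * B\<^sup>2)" by (rule h2)
      also have "\<dots> = 144 * pi * ((c + 2) * (c + 2)) * B\<^sup>2" by simp
      finally have "288 * pi * (c + 2) * B\<^sup>2 \<le> 144 * pi * ((c + 2) * (c + 2)) * B\<^sup>2" .
      also have "\<dots> \<le> 144 * pi * ((c + 2) * (c + 2)) * (B + 1)\<^sup>2"
        by (rule mult_left_mono[OF b]) (use c in simp)
      finally show ?thesis .
    qed
    also have "\<dots> = 16 * 9 * pi * (c + 2)\<^sup>2 * (B + 1)\<^sup>2" by (simp add: power2_eq_square)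
    also have "\<dots> \<le> 16 * pi\<^sup>2 * pi * (c + 2)\<^sup>2 * (B + 1)\<^sup>2"
      using p9 by (simp add: mult_right_mono)
    also have "\<dots> \<le> 32 * pi ^ 3 * (c + 2)\<^sup>2 * (B + 1)\<^sup>2"
    proof -
      have Y: "0 \<le> pi ^ 3 * ((c + 2)\<^sup>2 * (B + 1)\<^sup>2)" by simp
      have e1: "16 * pi\<^sup>2 * pi * (c + 2)\<^sup>2 * (B + 1)\<^sup>2 = 16 * (pi ^ 3 * ((c + 2)\<^sup>2 * (B + 1)\<^sup>2))"
        by (simp add: power2_eq_square power3_eq_cube mult_ac)
      have e2: "32 * pi ^ 3 * (c + 2)\<^sup>2 * (B + 1)\<^sup>2 = 32 * (pi ^ 3 * ((c + 2)\<^sup>2 * (B + 1)\<^sup>2))"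
        by (simp add: mult_ac)
      show ?thesis unfolding e1 e2 using Y by linarith
    qed
    finally show "180 * pi * (c + 2) * B\<^sup>2 \<le> 32 * pi ^ 3 * (c + 2)\<^sup>2 * (B + 1)\<^sup>2" .
  qed
  also have "\<dots> = (2 * (c + 2) * (B + 1))\<^sup>2 * (m / N1) * (2 * pi * A1) * (2 * pi * A2) * (2 * pi * A3)"
    by (simp add: Z_def A_def power2_eq_square power3_eq_cube field_simps)
  finally show ?thesis unfolding R A_def by (rule real_sqrt_le_mono)
qed

lemma dyadic_ge1: "dyadic N \<Longrightarrow> 1 \<le> N"
  unfolding dyadic_def by auto

lemma key:
  fixes c B \<delta> :: real and N1 N2 N3 :: nat and c1 c2 c3 \<sigma> :: "int \<Rightarrow> complex"
  assumes c: "0 < c" and B: "0 \<le> B"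
    and H: "dyadic N1 \<and> dyadic N2 \<and> dyadic N3 \<and>
      real N1 \<ge> 16 * real N2 \<and> real N1 \<ge> 16 * real N3 \<and>
      (\<forall>n. n \<notin> freq_set N1 \<longrightarrow> c1 n = 0) \<and>
      (\<forall>n. n \<notin> freq_set N2 \<longrightarrow> c2 n = 0) \<and>
      (\<forall>n. n \<notin> freq_set N3 \<longrightarrow> c3 n = 0) \<and>
      0 < \<delta> \<and> \<delta> \<le> c / real N1 \<and>
      (\<forall>k. cmod (\<sigma> k) \<le> B)"
  shows "L2TT \<delta> (\<lambda>t x. schr N1 c1 t x * mult_prod \<sigma> N2 c2 N3 c3 t x)
        \<le> (2 * (c + 2) * (B + 1)) * sqrt (real (min N2 N3) / real N1)
            * L2T (schr N1 c1 0) * L2T (schr N2 c2 0) * L2T (schr N3 c3 0) \<and>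
      L2TT \<delta> (\<lambda>t x. cnj (schr N1 c1 t x) * mult_prod \<sigma> N2 c2 N3 c3 t x)
        \<le> (2 * (c + 2) * (B + 1)) * sqrt (real (min N2 N3) / real N1)
            * L2T (schr N1 c1 0) * L2T (schr N2 c2 0) * L2T (schr N3 c3 0)"
proof -
  have N2: "1 \<le> N2" and N3: "1 \<le> N3" using H dyadic_ge1 by auto
  have big2: "16 * N2 \<le> N1" and big3: "16 * N3 \<le> N1" using H by (auto simp flip: of_nat_le_iff)
  have N1: "0 < real N1" using big2 N2 by simp
  have N1ne: "N1 \<noteq> 1" using big2 N2 by auto
  have supp: "int N1 \<le> 2 * \<bar>n\<bar>" if "c1 n \<noteq> 0" for n
  proof -
    have "n \<in> freq_set N1" using H that by blast
    then have "\<not> real_of_int \<bar>n\<bar> < real N1 / 2" using N1ne by (simp add: freq_set_def)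
    then have "real_of_int (int N1) \<le> real_of_int (2 * \<bar>n\<bar>)" by simp
    then show ?thesis by (simp only: of_int_le_iff)
  qed
  have supp': "int N1 \<le> 2 * \<bar>n\<bar>" if "cnj (c1 n) \<noteq> 0" for n using supp that by simp
  have d0: "0 \<le> \<delta>" and d1: "\<delta> \<le> c / real N1" using H by auto
  have sB: "\<And>k. cmod (\<sigma> k) \<le> B" using H by auto
  define A1 where "A1 = (\<Sum>n\<in>{-2 * int N1..2 * int N1}. (cmod (c1 n))\<^sup>2)"
  define A2 where "A2 = (\<Sum>n\<in>{-2 * int N2..2 * int N2}. (cmod (c2 n))\<^sup>2)"
  define A3 where "A3 = (\<Sum>n\<in>{-2 * int N3..2 * int N3}. (cmod (c3 n))\<^sup>2)"
  have A: "0 \<le> A1" "0 \<le> A2" "0 \<le> A3" unfolding A1_def A2_def A3_def by (auto intro: sum_nonneg)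
  have m: "1 \<le> real (min N2 N3)" using N2 N3 by simp
  have RHS: "(2 * (c + 2) * (B + 1)) * sqrt (real (min N2 N3) / real N1)
            * L2T (schr N1 c1 0) * L2T (schr N2 c2 0) * L2T (schr N3 c3 0)
     = 2 * (c + 2) * (B + 1) * sqrt (real (min N2 N3) / real N1) * sqrt (2 * pi * A1) * sqrt (2 * pi * A2) * sqrt (2 * pi * A3)"
    by (simp add: L2T_schr A1_def A2_def A3_def)
  have fin: "sqrt ((4 * real (min N2 N3) + 1) * (36 * pi * (\<delta> + 1 / (real N1 / 2))) * (B\<^sup>2 * (A1 * A2 * A3)))
    \<le> 2 * (c + 2) * (B + 1) * sqrt (real (min N2 N3) / real N1) * sqrt (2 * pi * A1) * sqrt (2 * pi * A2) * sqrt (2 * pi * A3)"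
    by (rule final_arith[OF m N1 d0 d1 c B A])
  have e1: "schr N1 c1 t x = (\<Sum>r\<in>{-2 * int N1..2 * int N1}. c1 r * cis (real_of_int (1*r) * x - real_of_int (1*r^2) * t))" for t x
    by (simp add: schr_def)
  have e2: "cnj (schr N1 c1 t x) = (\<Sum>r\<in>{-2 * int N1..2 * int N1}. cnj (c1 r) * cis (real_of_int ((-1)*r) * x - real_of_int ((-1)*r^2) * t))" for t x
    unfolding schr_def cnj_sum by (intro sum.cong refl) (simp add: cis_cnj algebra_simps)
  have I1: "(LBINT t=0..\<delta>. (LBINT x=0..2*pi. (cmod (schr N1 c1 t x * mult_prod \<sigma> N2 c2 N3 c3 t x))\<^sup>2))
     \<le> (4 * real (min N2 N3) + 1) * (36 * pi * (\<delta> + 1 / (real N1 / 2))) * (B\<^sup>2 * (A1 * A2 * A3))"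
    using main_gen[of 1 N2 N3 N1 c1 \<delta> \<sigma> B c2 c3, OF _ N2 N3 big2 big3 supp d0 sB]
    unfolding e1 A1_def A2_def A3_def by (simp add: add.commute)
  have I2: "(LBINT t=0..\<delta>. (LBINT x=0..2*pi. (cmod (cnj (schr N1 c1 t x) * mult_prod \<sigma> N2 c2 N3 c3 t x))\<^sup>2))
     \<le> (4 * real (min N2 N3) + 1) * (36 * pi * (\<delta> + 1 / (real N1 / 2))) * (B\<^sup>2 * (A1 * A2 * A3))"
    using main_gen[of "-1" N2 N3 N1 "\<lambda>n. cnj (c1 n)" \<delta> \<sigma> B c2 c3, OF _ N2 N3 big2 big3 supp' d0 sB]
    unfolding e2 A1_def A2_def A3_def by (simp add: add.commute)
  show ?thesis
    unfolding RHS L2TT_def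
    using order_trans[OF real_sqrt_le_mono[OF I1] fin] order_trans[OF real_sqrt_le_mono[OF I2] fin] by simp
qed

theorem lemma2p9:
  shows "\<exists>C0>0. \<forall>c>0. \<forall>B\<ge>0. \<exists>C>0.
    \<forall>N1 N2 N3 c1 c2 c3 \<delta> (\<sigma> :: int \<Rightarrow> complex).
      dyadic N1 \<and> dyadic N2 \<and> dyadic N3 \<and>
      real N1 \<ge> C0 * real N2 \<and> real N1 \<ge> C0 * real N3 \<and>
      (\<forall>n. n \<notin> freq_set N1 \<longrightarrow> c1 n = 0) \<and>
      (\<forall>n. n \<notin> freq_set N2 \<longrightarrow> c2 n = 0) \<and>
      (\<forall>n. n \<notin> freq_set N3 \<longrightarrow> c3 n = 0) \<and>
      0 < \<delta> \<and> \<delta> \<le> c / real N1 \<and>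
      (\<forall>k. cmod (\<sigma> k) \<le> B)
      \<longrightarrow>
      L2TT \<delta> (\<lambda>t x. schr N1 c1 t x * mult_prod \<sigma> N2 c2 N3 c3 t x)
        \<le> C * sqrt (real (min N2 N3) / real N1)
            * L2T (schr N1 c1 0) * L2T (schr N2 c2 0) * L2T (schr N3 c3 0) \<and>
      L2TT \<delta> (\<lambda>t x. cnj (schr N1 c1 t x) * mult_prod \<sigma> N2 c2 N3 c3 t x)
        \<le> C * sqrt (real (min N2 N3) / real N1)
            * L2T (schr N1 c1 0) * L2T (schr N2 c2 0) * L2T (schr N3 c3 0)"
  apply (rule exI[of _ "16::real"])
  apply (rule conjI, simp)
  apply (intro allI impI)
  apply (rule_tac x="2 * (c + 2) * (B + 1)" in exI)
  apply (rule conjI, simp)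
  apply (intro allI impI)
  apply (rule key)
    apply assumption+
  done

end
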